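(* Let $G$ be a finite loopless graph with no clique on $D+1$ vertices and with maximum degree $\Delta(G)\leq D$. Let $c\ge 1$ be an integer and let $D=\sum_{i=1}^{c+1}\alpha_i$, where $\alpha_1,\dots,\alpha_{c+1}\geq 2$ are integers. Let $\Xi$ be the set of all (not necessarily proper) colorings $\psi:V(G)\to\{1,\dots,c+1\}$, and for $\psi\in\Xi$ let $\Phi(\psi)=\sum_{i=1}^{c+1}\frac{f_i(\psi)}{\alpha_i}$, where $f_i(\psi)$ is the number of edges of $G$ both of whose endpoints have color $i$ under $\psi$. Then there exists a coloring $\xi\in\Xi$ such that: (1) $\Phi(\xi)=\min_{\psi\in\Xi}\Phi(\psi)$; and (2) for every $1\leq i\leq c+1$, there is no clique in $G$ on $\alpha_i+1$ vertices all of which have color $i$ under $\xi$. *)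

theory Defs
  imports Complex_Main
begin

text \<open>A finite loopless (multi)graph on the finite vertex type 'a is given by an
edge multiplicity function m on 2-element vertex sets: m e is the number of
parallel edges joining the two endpoints of e.\<close>

definition loopless_multigraph :: "('a::finite set \<Rightarrow> nat) \<Rightarrow> bool" where
  "loopless_multigraph m \<longleftrightarrow> (\<forall>e. 0 < m e \<longrightarrow> card e = 2)"

definition degree :: "('a::finite set \<Rightarrow> nat) \<Rightarrow> 'a \<Rightarrow> nat" where
  "degree m v = (\<Sum>e\<in>{e. v \<in> e}. m e)"

definition max_degree :: "('a::finite set \<Rightarrow> nat) \<Rightarrow> nat" where
  "max_degree m = Max (range (degree m))"

definition is_clique :: "('a::finite set \<Rightarrow> nat) \<Rightarrow> 'a set \<Rightarrow> bool" where
  "is_clique m K \<longleftrightarrow> (\<forall>u\<in>K. \<forall>v\<in>K. u \<noteq> v \<longrightarrow> 0 < m {u, v})"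

definition mono_edges :: "('a::finite set \<Rightarrow> nat) \<Rightarrow> ('a \<Rightarrow> nat) \<Rightarrow> nat \<Rightarrow> nat" where
  "mono_edges m psi i = (\<Sum>e\<in>{e. card e = 2 \<and> (\<forall>x\<in>e. psi x = i)}. m e)"

definition colorings :: "nat \<Rightarrow> ('a::finite \<Rightarrow> nat) set" where
  "colorings c = {psi. \<forall>v. psi v \<in> {1..c+1}}"

definition Phi :: "('a::finite set \<Rightarrow> nat) \<Rightarrow> nat \<Rightarrow> (nat \<Rightarrow> nat) \<Rightarrow> ('a \<Rightarrow> nat) \<Rightarrow> real" where
  "Phi m c \<alpha> psi = (\<Sum>i=1..c+1. real (mono_edges m psi i) / real (\<alpha> i))"

end

theory Submission
  imports Defs "HOL-Library.FuncSet"
begin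

definition nbr :: "('a::finite set \<Rightarrow> nat) \<Rightarrow> ('a \<Rightarrow> nat) \<Rightarrow> nat \<Rightarrow> 'a \<Rightarrow> 'a set" where
  "nbr m psi l v = {u. u \<noteq> v \<and> 0 < m {u, v} \<and> psi u = l}"

definition dcol :: "('a::finite set \<Rightarrow> nat) \<Rightarrow> ('a \<Rightarrow> nat) \<Rightarrow> nat \<Rightarrow> 'a \<Rightarrow> nat" where
  "dcol m psi l v = (\<Sum>u\<in>{u. u \<noteq> v \<and> psi u = l}. m {u, v})"

lemma card_nbr_le_dcol: "card (nbr m psi l v) \<le> dcol m psi l v"
proof -
  have "card (nbr m psi l v) = (\<Sum>u\<in>nbr m psi l v. 1)" by simp
  also have "\<dots> \<le> (\<Sum>u\<in>nbr m psi l v. m {u, v})"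
    by (rule sum_mono) (auto simp: nbr_def)
  also have "\<dots> \<le> dcol m psi l v" unfolding dcol_def
    by (rule sum_mono2) (auto simp: nbr_def)
  finally show ?thesis .
qed

lemma mono_split:
  "mono_edges m psi j = (\<Sum>e\<in>{e. card e = 2 \<and> (\<forall>x\<in>e. psi x = j) \<and> v \<notin> e}. m e)
      + (if psi v = j then dcol m psi j v else 0)"
proof -
  let ?E = "{e. card e = 2 \<and> (\<forall>x\<in>e. psi x = j)}"
  let ?A = "{e. card e = 2 \<and> (\<forall>x\<in>e. psi x = j) \<and> v \<notin> e}"
  let ?B = "{e. card e = 2 \<and> (\<forall>x\<in>e. psi x = j) \<and> v \<in> e}"
  have E: "?E = ?A \<union> ?B" by auto
  have "mono_edges m psi j = sum m ?A + sum m ?B"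
    unfolding mono_edges_def E by (rule sum.union_disjoint) auto
  moreover have "sum m ?B = (if psi v = j then dcol m psi j v else 0)"
  proof (cases "psi v = j")
    case True
    have B: "?B = (\<lambda>u. {u, v}) ` {u. u \<noteq> v \<and> psi u = j}"
    proof
      show "?B \<subseteq> (\<lambda>u. {u, v}) ` {u. u \<noteq> v \<and> psi u = j}"
      proof
        fix e assume e: "e \<in> ?B"
        then obtain x y where xy: "e = {x, y}" "x \<noteq> y" by (auto simp: card_2_iff)
        show "e \<in> (\<lambda>u. {u, v}) ` {u. u \<noteq> v \<and> psi u = j}"
        proof (cases "x = v")
          case True then show ?thesis using e xy by (auto intro!: image_eqI[of _ _ y])
        next
          case False then have "y = v" using e xy by auto
          then show ?thesis using e xy by (auto intro!: image_eqI[of _ _ x])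
        qed
      qed
    next
      show "(\<lambda>u. {u, v}) ` {u. u \<noteq> v \<and> psi u = j} \<subseteq> ?B"
        using True by (auto simp: card_2_iff)
    qed
    have inj: "inj_on (\<lambda>u. {u, v}) {u. u \<noteq> v \<and> psi u = j}"
      by (auto simp: inj_on_def doubleton_eq_iff)
    show ?thesis using True unfolding B dcol_def by (simp add: sum.reindex[OF inj])
  next
    case False
    have e: "?B = {}" using False by auto
    show ?thesis using False by (subst e) simp
  qed
  ultimately show ?thesis by simp
qed

lemma dcol_upd: "dcol m (psi(v := l)) j v = dcol m psi j v"
  unfolding dcol_def by (rule sum.cong) auto

lemma nbr_upd: "nbr m (psi(v := l)) j v = nbr m psi j v"
  unfolding nbr_def by auto

lemma mono_upd:
  assumes "psi v = i" "i \<noteq> l"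
  shows "real (mono_edges m (psi(v := l)) j) =
     real (mono_edges m psi j) + (if j = l then real (dcol m psi l v) else 0)
      - (if j = i then real (dcol m psi i v) else 0)"
proof -
  have A: "{e. card e = 2 \<and> (\<forall>x\<in>e. (psi(v:=l)) x = j) \<and> v \<notin> e}
         = {e. card e = 2 \<and> (\<forall>x\<in>e. psi x = j) \<and> v \<notin> e}" by auto
  show ?thesis
    using mono_split[of m "psi(v:=l)" j v] mono_split[of m psi j v] assms
    unfolding A dcol_upd by auto
qed


locale setting =
  fixes m :: "'a::finite set \<Rightarrow> nat" and D c :: nat and \<alpha> :: "nat \<Rightarrow> nat"
  assumes ll: "loopless_multigraph m"
    and nocl: "\<not> (\<exists>K. is_clique m K \<and> card K = D + 1)"
    and md: "max_degree m \<le> D"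
    and c1: "c \<ge> 1"
    and Ds: "D = (\<Sum>i=1..c+1. \<alpha> i)"
    and a2: "\<forall>i\<in>{1..c+1}. \<alpha> i \<ge> 2"
begin

definition bad where
  "bad psi K i \<longleftrightarrow> i \<in> {1..c+1} \<and> is_clique m K \<and> card K = \<alpha> i + 1 \<and> (\<forall>v\<in>K. psi v = i)"
definition badset where "badset psi = {K. \<exists>i. bad psi K i}"
definition Phimin where "Phimin = Min (Phi m c \<alpha> ` colorings c)"
definition Mn where "Mn = {psi \<in> colorings c. Phi m c \<alpha> psi = Phimin}"
definition bmin where "bmin = Min ((\<lambda>psi. card (badset psi)) ` Mn)"
definition MM where "MM = {psi \<in> Mn. card (badset psi) = bmin}"

lemma finite_col: "finite (colorings c :: ('a \<Rightarrow> nat) set)"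
proof -
  have "colorings c = (PiE UNIV (\<lambda>_. {1..c+1}) :: ('a \<Rightarrow> nat) set)"
    by (auto simp: colorings_def PiE_UNIV_domain)
  then show ?thesis by (simp add: finite_PiE)
qed

lemma col_ne: "(\<lambda>_. 1) \<in> colorings c"
  by (auto simp: colorings_def)

lemma Phimin_le: "psi \<in> colorings c \<Longrightarrow> Phimin \<le> Phi m c \<alpha> psi"
  unfolding Phimin_def using finite_col by (auto intro: Min_le)

lemma Mn_ne: "Mn \<noteq> {}"
proof -
  have "Phimin \<in> Phi m c \<alpha> ` colorings c"
    unfolding Phimin_def using finite_col col_ne by (intro Min_in) auto
  then show ?thesis by (auto simp: Mn_def)
qed

lemma finite_Mn: "finite Mn"
  using finite_col by (auto simp: Mn_def)

lemma bmin_le: "psi \<in> Mn \<Longrightarrow> bmin \<le> card (badset psi)"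
  unfolding bmin_def using finite_Mn by (auto intro: Min_le)

lemma MM_ne: "\<exists>psi. psi \<in> MM"
proof -
  have "bmin \<in> (\<lambda>psi. card (badset psi)) ` Mn"
    unfolding bmin_def using finite_Mn Mn_ne by (intro Min_in) auto
  then show ?thesis by (auto simp: MM_def)
qed

lemma finite_badset: "finite (badset psi)"
  by (rule finite_subset[OF subset_UNIV]) simp

lemma alpha_pos: "j \<in> {1..c+1} \<Longrightarrow> \<alpha> j \<ge> 2"
  using a2 by auto

lemma degree_eq: "degree m v = (\<Sum>u\<in>{u. u \<noteq> v}. m {u, v})"
proof -
  have "degree m v = (\<Sum>e\<in>{e. v \<in> e \<and> card e = 2}. m e)"
    unfolding degree_def
    by (rule sum.mono_neutral_right) (use ll in \<open>auto simp: loopless_multigraph_def\<close>)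
  also have "{e. v \<in> e \<and> card e = 2} = (\<lambda>u. {u, v}) ` {u. u \<noteq> v}"
  proof
    show "{e. v \<in> e \<and> card e = 2} \<subseteq> (\<lambda>u. {u, v}) ` {u. u \<noteq> v}"
    proof
      fix e assume e: "e \<in> {e. v \<in> e \<and> card e = 2}"
      then obtain x y where xy: "e = {x, y}" "x \<noteq> y" by (auto simp: card_2_iff)
      show "e \<in> (\<lambda>u. {u, v}) ` {u. u \<noteq> v}"
      proof (cases "x = v")
        case True then show ?thesis using e xy by (auto intro!: image_eqI[of _ _ y])
      next
        case False then have "y = v" using e xy by auto
        then show ?thesis using e xy by (auto intro!: image_eqI[of _ _ x])
      qed
    qed
  qed (auto simp: card_2_iff)
  also have "(\<Sum>e\<in>(\<lambda>u. {u, v}) ` {u. u \<noteq> v}. m e) = (\<Sum>u\<in>{u. u \<noteq> v}. m {u, v})"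
    by (rule sum.reindex_cong[where l="\<lambda>u. {u, v}"]) (auto simp: inj_on_def doubleton_eq_iff)
  finally show ?thesis .
qed

lemma deg_sum:
  assumes "psi \<in> colorings c"
  shows "(\<Sum>l=1..c+1. dcol m psi l v) = degree m v"
proof -
  have "(\<Sum>l=1..c+1. dcol m psi l v) =
        (\<Sum>l=1..c+1. \<Sum>u\<in>{u. u \<noteq> v}. if psi u = l then m {u, v} else 0)"
    unfolding dcol_def
    by (rule sum.cong[OF refl], subst sum.inter_filter[symmetric]) (auto intro: sum.cong)
  also have "\<dots> = (\<Sum>u\<in>{u. u \<noteq> v}. \<Sum>l=1..c+1. if psi u = l then m {u, v} else 0)"
    by (rule sum.swap)
  also have "\<dots> = (\<Sum>u\<in>{u. u \<noteq> v}. m {u, v})"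
  proof (rule sum.cong[OF refl])
    fix u
    have "psi u \<in> {1..c+1}" using assms by (auto simp: colorings_def)
    then show "(\<Sum>l=1..c+1. if psi u = l then m {u, v} else 0) = m {u, v}"
      by simp
  qed
  finally show ?thesis using degree_eq by simp
qed

lemma deg_le: "degree m v \<le> D"
proof -
  have "degree m v \<le> max_degree m" unfolding max_degree_def by (rule Max_ge) auto
  then show ?thesis using md by simp
qed


lemma Phi_upd:
  assumes "psi \<in> colorings c" "psi v = i" "l \<in> {1..c+1}" "i \<noteq> l"
  shows "Phi m c \<alpha> (psi(v := l)) = Phi m c \<alpha> psi + real (dcol m psi l v) / real (\<alpha> l)
           - real (dcol m psi i v) / real (\<alpha> i)"
proof -
  have i: "i \<in> {1..c+1}" using assms by (auto simp: colorings_def)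
  have "Phi m c \<alpha> (psi(v := l)) = (\<Sum>j=1..c+1. real (mono_edges m psi j) / real (\<alpha> j)
     + (if j = l then real (dcol m psi l v) / real (\<alpha> l) else 0)
     - (if j = i then real (dcol m psi i v) / real (\<alpha> i) else 0))"
    unfolding Phi_def
    by (rule sum.cong[OF refl]) (simp add: mono_upd[of psi v i l m, OF assms(2,4)] add_divide_distrib diff_divide_distrib)
  also have "\<dots> = Phi m c \<alpha> psi + real (dcol m psi l v) / real (\<alpha> l)
           - real (dcol m psi i v) / real (\<alpha> i)"
    unfolding Phi_def sum_subtractf sum.distrib using assms(3) i by simp
  finally show ?thesis .
qed

lemma hard:
  assumes MM: "psi \<in> MM" and bK: "bad psi K i" and vK: "v \<in> K" and l: "l \<in> {1..c+1}" and li: "l \<noteq> i"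
  shows "nbr m psi i v = K - {v}" "psi(v := l) \<in> MM"
    "bad (psi(v := l)) (insert v (nbr m psi l v)) l"
    "card (nbr m psi l v) = \<alpha> l"
proof -
  have col: "psi \<in> colorings c" and Mn: "psi \<in> Mn" and bm: "card (badset psi) = bmin"
    using MM by (auto simp: MM_def Mn_def)
  have i: "i \<in> {1..c+1}" and cl: "is_clique m K" and cK: "card K = \<alpha> i + 1" and colK: "\<forall>u\<in>K. psi u = i"
    using bK by (auto simp: bad_def)
  have pv: "psi v = i" using colK vK by auto
  have finK: "finite K" by simp
  have sub: "K - {v} \<subseteq> nbr m psi i v"
    using cl colK vK unfolding is_clique_def nbr_def by auto
  have cKv: "card (K - {v}) = \<alpha> i" using cK vK finK by simp
  have di: "\<alpha> i \<le> dcol m psi i v"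
    using card_mono[OF _ sub] card_nbr_le_dcol[of m psi i v] cKv by simp
  have ge: "\<alpha> j \<le> dcol m psi j v" if j: "j \<in> {1..c+1}" for j
  proof (cases "j = i")
    case True then show ?thesis using di by simp
  next
    case False
    have colj: "psi(v := j) \<in> colorings c" using col j by (auto simp: colorings_def)
    have "Phi m c \<alpha> psi \<le> Phi m c \<alpha> (psi(v := j))"
      using Mn Phimin_le[OF colj] by (simp add: Mn_def)
    then have "real (dcol m psi i v) / real (\<alpha> i) \<le> real (dcol m psi j v) / real (\<alpha> j)"
      using Phi_upd[OF col pv j] False by simp
    moreover have "1 \<le> real (dcol m psi i v) / real (\<alpha> i)"
      using di alpha_pos[OF i] by simp
    ultimately have "1 \<le> real (dcol m psi j v) / real (\<alpha> j)" by linarith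
    then show ?thesis using alpha_pos[OF j] by (simp add: le_divide_eq)
  qed
  have eq: "dcol m psi j v = \<alpha> j" if j: "j \<in> {1..c+1}" for j
  proof (rule ccontr)
    assume "dcol m psi j v \<noteq> \<alpha> j"
    then have "\<alpha> j < dcol m psi j v" using ge[OF j] by simp
    then have "(\<Sum>l=1..c+1. \<alpha> l) < (\<Sum>l=1..c+1. dcol m psi l v)"
      using ge j by (intro sum_strict_mono_ex1) auto
    then show False using deg_sum[OF col, of v] deg_le[of v] Ds by simp
  qed
  show nb: "nbr m psi i v = K - {v}"
  proof (rule card_subset_eq[OF _ sub, symmetric])
    show "finite (nbr m psi i v)" by simp
    show "card (K - {v}) = card (nbr m psi i v)"
      using card_mono[OF _ sub] card_nbr_le_dcol[of m psi i v] cKv eq[OF i] by simp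
  qed
  let ?psi' = "psi(v := l)"
  let ?N = "insert v (nbr m psi l v)"
  have col': "?psi' \<in> colorings c" using col l by (auto simp: colorings_def)
  have "Phi m c \<alpha> ?psi' = Phi m c \<alpha> psi"
    using Phi_upd[OF col pv l li[symmetric]] eq[OF i] eq[OF l] alpha_pos[OF i] alpha_pos[OF l] by simp
  then have Mn': "?psi' \<in> Mn" using Mn col' by (simp add: Mn_def)
  have Kin: "K \<in> badset psi" using bK by (auto simp: badset_def)
  have cK3: "card K \<ge> 3" using cK alpha_pos[OF i] by simp
  obtain u where u: "u \<in> K" "u \<noteq> v"
  proof -
    have "card (K - {v}) \<noteq> 0" using cKv alpha_pos[OF i] by simp
    then have "K - {v} \<noteq> {}" by (metis card.empty)
    then show ?thesis using that by auto
  qed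
  have Knot: "K \<notin> badset ?psi'"
  proof
    assume "K \<in> badset ?psi'"
    then obtain j where "bad ?psi' K j" by (auto simp: badset_def)
    then have "?psi' v = j" "?psi' u = j" using vK u by (auto simp: bad_def)
    then show False using u colK li by auto
  qed
  have cnl: "card (nbr m psi l v) \<le> \<alpha> l" using card_nbr_le_dcol[of m psi l v] eq[OF l] by simp
  have bsub: "badset ?psi' \<subseteq> (badset psi - {K}) \<union> {?N}"
  proof
    fix K' assume K': "K' \<in> badset ?psi'"
    then obtain j where bj: "bad ?psi' K' j" by (auto simp: badset_def)
    show "K' \<in> (badset psi - {K}) \<union> {?N}"
    proof (cases "v \<in> K'")
      case False
      then have "bad psi K' j" using bj by (auto simp: bad_def)
      then show ?thesis using K' Knot by (auto simp: badset_def)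
    next
      case True
      then have jl: "j = l" using bj by (auto simp: bad_def)
      have s2: "K' - {v} \<subseteq> nbr m psi l v"
        using bj True jl unfolding bad_def is_clique_def nbr_def
        by (auto simp: insert_commute)
      have "card (K' - {v}) = \<alpha> l" using bj True jl by (auto simp: bad_def)
      then have "K' - {v} = nbr m psi l v"
        using card_subset_eq[OF _ s2] cnl card_mono[OF _ s2] by simp
      then have "K' = ?N" using True by auto
      then show ?thesis by simp
    qed
  qed
  have Nin: "?N \<in> badset ?psi'"
  proof (rule ccontr)
    assume "?N \<notin> badset ?psi'"
    then have "badset ?psi' \<subseteq> badset psi - {K}" using bsub by auto
    then have "card (badset ?psi') \<le> card (badset psi - {K})"
      using finite_badset by (intro card_mono) auto
    also have "\<dots> < card (badset psi)"
      using Kin finite_badset by (intro card_Diff1_less) auto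
    finally show False using bmin_le[OF Mn'] bm by simp
  qed
  then obtain j where bj: "bad ?psi' ?N j" by (auto simp: badset_def)
  then have "j = l" by (auto simp: bad_def)
  then show bN: "bad ?psi' ?N l" using bj by simp
  have "card (badset ?psi') \<le> card ((badset psi - {K}) \<union> {?N})"
    using bsub finite_badset by (intro card_mono) auto
  also have "\<dots> \<le> card (badset psi - {K}) + 1" by (simp add: card_insert_le_m1 card_Un_le)
  also have "\<dots> = card (badset psi)"
  proof -
    have "card (badset psi) > 0" using Kin finite_badset card_gt_0_iff by blast
    then show ?thesis using Kin finite_badset by (simp add: card_Diff_singleton)
  qed
  finally show "?psi' \<in> MM" using bmin_le[OF Mn'] bm Mn' by (simp add: MM_def)
  have "v \<notin> nbr m psi l v" by (simp add: nbr_def)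
  then show "card (nbr m psi l v) = \<alpha> l" using bN by (simp add: bad_def)
qed

end


locale walk = setting m D c \<alpha> for m :: "'a::finite set \<Rightarrow> nat" and D c \<alpha> +
  fixes psi1 :: "'a \<Rightarrow> nat" and C1 :: "'a set" and a b :: nat and x1 x2 :: 'a
  assumes MM1: "psi1 \<in> MM" and bad1: "bad psi1 C1 a" and x1C: "x1 \<in> C1"
    and brange: "b \<in> {1..c+1}" and ab: "a \<noteq> b"
    and x2N: "x2 \<in> nbr m psi1 b x1" and notc: "\<exists>z\<in>C1 - {x1}. \<not> 0 < m {z, x2}"
begin

definition col :: "nat \<Rightarrow> nat" where "col j = (if odd j then a else b)"
definition st :: "(nat \<Rightarrow> 'a) \<Rightarrow> nat \<Rightarrow> 'a \<Rightarrow> nat" where "st xs j = (\<lambda>v. if v \<in> xs ` {1..<j} then (if psi1 v = a then b else a) else psi1 v)"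
definition Q :: "(nat \<Rightarrow> 'a) \<Rightarrow> nat \<Rightarrow> 'a set" where "Q xs j = nbr m (st xs (j-1)) (col j) (xs (j-1))"
definition C :: "(nat \<Rightarrow> 'a) \<Rightarrow> nat \<Rightarrow> 'a set" where "C xs j = (if j = 1 then C1 else insert (xs (j-1)) (Q xs j))"
definition V :: "(nat \<Rightarrow> 'a) \<Rightarrow> nat \<Rightarrow> 'a set" where "V xs n = (\<Union>j\<in>{1..n}. C xs j)"
definition W :: "(nat \<Rightarrow> 'a) \<Rightarrow> nat \<Rightarrow> bool" where "W xs n \<longleftrightarrow> xs 1 = x1 \<and> xs 2 = x2 \<and>
   (\<forall>j\<in>{1..n}. st xs j \<in> MM \<and> bad (st xs j) (C xs j) (col j) \<and> xs j \<in> C xs j) \<and>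
   (\<forall>j\<in>{2..n}. xs j \<in> Q xs j \<and> Q xs j \<inter> V xs (j-1) = {})"

lemma arange: "a \<in> {1..c+1}" using bad1 by (simp add: bad_def)

lemma col_range: "col j \<in> {1..c+1}" using arange brange by (simp add: col_def)

lemma col_Suc: "col (Suc j) = (if col j = a then b else a)"
  using ab by (auto simp: col_def)

lemma col_eq_iff: "col i = col j \<longleftrightarrow> (odd i \<longleftrightarrow> odd j)"
  using ab by (auto simp: col_def)

lemma col_ne_Suc: "col (Suc j) \<noteq> col j"
  using ab by (auto simp: col_def)

lemma st_unmoved: "v \<notin> xs ` {1..<j} \<Longrightarrow> st xs j v = psi1 v"
  by (simp add: st_def)

lemma st1: "st xs 1 = psi1"
  by (rule ext) (simp add: st_def)

lemma V_mono: "i \<le> j \<Longrightarrow> V xs i \<subseteq> V xs j"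
  unfolding V_def by (rule UN_mono) auto

lemma C_sub_V: "j \<in> {1..n} \<Longrightarrow> C xs j \<subseteq> V xs n"
  by (auto simp: V_def)

context
  fixes xs :: "nat \<Rightarrow> 'a" and n :: nat
  assumes Wn: "W xs n"
begin

lemma W_st: "j \<in> {1..n} \<Longrightarrow> st xs j \<in> MM" and W_bad: "j \<in> {1..n} \<Longrightarrow> bad (st xs j) (C xs j) (col j)"
  and W_in: "j \<in> {1..n} \<Longrightarrow> xs j \<in> C xs j"
  and W_Q: "j \<in> {2..n} \<Longrightarrow> xs j \<in> Q xs j" and W_fresh: "j \<in> {2..n} \<Longrightarrow> Q xs j \<inter> V xs (j-1) = {}"
  and W1: "xs 1 = x1" and W2: "xs 2 = x2"
  using Wn by (auto simp: W_def)

lemma xs_in_V: "i \<in> {1..j} \<Longrightarrow> j \<le> n \<Longrightarrow> xs i \<in> V xs j"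
  using W_in[of i] by (auto simp: V_def)

lemma xs_notin_V: "j \<in> {2..n} \<Longrightarrow> xs j \<notin> V xs (j-1)"
  using W_Q W_fresh by blast

lemma xs_dist: "i \<in> {1..<j} \<Longrightarrow> j \<le> n \<Longrightarrow> xs i \<noteq> xs j"
proof
  assume i: "i \<in> {1..<j}" and j: "j \<le> n" and eq: "xs i = xs j"
  have "xs i \<in> V xs (j-1)" using i j by (intro xs_in_V) auto
  then show False using xs_notin_V[of j] i j eq by auto
qed

lemma xs_notin_prev: "j \<le> n \<Longrightarrow> xs j \<notin> xs ` {1..<j}"
proof
  assume j: "j \<le> n" and "xs j \<in> xs ` {1..<j}"
  then obtain i where "i \<in> {1..<j}" "xs j = xs i" by auto
  then show False using xs_dist[of i j] j by simp
qed

lemma psi1_xs: "j \<in> {1..n} \<Longrightarrow> psi1 (xs j) = col j"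
  using W_bad[of j] W_in[of j] st_unmoved[OF xs_notin_prev[of j]] by (auto simp: bad_def)

lemma st_moved: "i \<in> {1..<j} \<Longrightarrow> i \<le> n \<Longrightarrow> st xs j (xs i) = col (Suc i)"
  using psi1_xs[of i] col_Suc[of i] by (auto simp: st_def)

lemma Q_props: "j \<in> {2..n} \<Longrightarrow> v \<in> Q xs j \<Longrightarrow> v \<notin> xs ` {1..<j} \<and> psi1 v = col j"
proof -
  assume j: "j \<in> {2..n}" and v: "v \<in> Q xs j"
  have nv: "v \<notin> xs ` {1..<j}"
  proof
    assume "v \<in> xs ` {1..<j}"
    then obtain i where "i \<in> {1..<j}" "v = xs i" by auto
    then have "v \<in> V xs (j-1)" using j by (auto intro!: xs_in_V)
    then show False using W_fresh[OF j] v by auto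
  qed
  then have "v \<notin> xs ` {1..<j-1}" by auto
  then show ?thesis using nv v unfolding Q_def nbr_def using st_unmoved by auto
qed

lemma nbr_C: "j \<in> {1..n} \<Longrightarrow> u \<in> C xs j \<Longrightarrow> nbr m (st xs j) (col j) u = C xs j - {u}"
proof -
  assume j: "j \<in> {1..n}" and u: "u \<in> C xs j"
  obtain l where "l \<in> {1..c+1}" "l \<noteq> col j"
    using col_range[of "Suc j"] col_ne_Suc[of j] by blast
  then show ?thesis using hard(1)[OF W_st[OF j] W_bad[OF j] u] by blast
qed


lemma col1: "col 1 = a" and col2: "col 2 = b" by (auto simp: col_def)

lemma step:
  assumes n2: "n \<ge> 2"
  shows "st xs (Suc n) \<in> MM" "bad (st xs (Suc n)) (C xs (Suc n)) (col (Suc n))"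
    "card (Q xs (Suc n)) = \<alpha> (col (Suc n))" "Q xs (Suc n) \<inter> V xs n = {}"
proof -
  have nn: "n \<in> {1..n}" using n2 by simp
  let ?s = "st xs n"
  have Qdef: "Q xs (Suc n) = nbr m ?s (col (Suc n)) (xs n)" by (simp add: Q_def)
  have stS: "st xs (Suc n) = ?s(xs n := col (Suc n))"
  proof
    fix v show "st xs (Suc n) v = (?s(xs n := col (Suc n))) v"
    proof (cases "v = xs n")
      case True then show ?thesis using st_moved[of n "Suc n"] n2 by simp
    next
      case False
      have "{1..<Suc n} = insert n {1..<n}" using n2 by auto
      then show ?thesis using False by (simp add: st_def)
    qed
  qed
  have Cn1: "C xs (Suc n) = insert (xs n) (Q xs (Suc n))" using n2 by (simp add: C_def)
  note H = hard[OF W_st[OF nn] W_bad[OF nn] W_in[OF nn] col_range[of "Suc n"] col_ne_Suc[of n]]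
  show MMn: "st xs (Suc n) \<in> MM" using H(2) stS by simp
  show bn: "bad (st xs (Suc n)) (C xs (Suc n)) (col (Suc n))" using H(3) stS Cn1 Qdef by simp
  show cQ: "card (Q xs (Suc n)) = \<alpha> (col (Suc n))" using H(4) Qdef by simp
  have cliq: "is_clique m (C xs (Suc n))" using bn by (simp add: bad_def)
  have xsn_notV: "xs n \<notin> V xs (n-1)" using xs_notin_V[of n] n2 by simp
  have M1: "xs l \<notin> Q xs (Suc n)" if l: "l \<in> {1..<n}" for l
  proof
    assume lin: "xs l \<in> Q xs (Suc n)"
    have a1: "?s (xs l) = col (Suc n)" "0 < m {xs l, xs n}" using lin Qdef by (auto simp: nbr_def)
    have "?s (xs l) = col (Suc l)" using st_moved[of l n] l by simp
    then have "col l = col n" using a1 by (simp add: col_eq_iff)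
    have lr: "l \<in> {1..n}" using l by simp
    have "xs n \<notin> xs ` {1..<l}" using xs_notin_prev[of n] l by auto
    then have "st xs l (xs n) = col l"
      using st_unmoved psi1_xs[OF nn] \<open>col l = col n\<close> by simp
    then have "xs n \<in> nbr m (st xs l) (col l) (xs l)"
      using a1 xs_dist[of l n] l by (auto simp: nbr_def insert_commute)
    then have "xs n \<in> C xs l" using nbr_C[OF lr W_in[OF lr]] by auto
    moreover have "C xs l \<subseteq> V xs (n-1)" using l by (intro C_sub_V) auto
    ultimately show False using xsn_notV by auto
  qed
  have Qun: "w \<notin> xs ` {1..<Suc n} \<and> psi1 w = col (Suc n)" if wQ: "w \<in> Q xs (Suc n)" for w
  proof -
    have "w \<noteq> xs n" using wQ Qdef by (auto simp: nbr_def)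
    moreover have "w \<notin> xs ` {1..<n}" using M1 wQ by auto
    ultimately have nw: "w \<notin> xs ` {1..<Suc n}" using less_Suc_eq by auto
    have "?s w = col (Suc n)" using wQ Qdef by (auto simp: nbr_def)
    then show ?thesis using nw st_unmoved[of w xs n] \<open>w \<notin> xs ` {1..<n}\<close> by simp
  qed
  show "Q xs (Suc n) \<inter> V xs n = {}"
  proof (rule ccontr)
    assume "Q xs (Suc n) \<inter> V xs n \<noteq> {}"
    then obtain u where uQ: "u \<in> Q xs (Suc n)" and uV: "u \<in> V xs n" by auto
    obtain j where j: "j \<in> {1..n}" and uC: "u \<in> C xs j" using uV by (auto simp: V_def)
    have pj: "psi1 u = col j"
    proof (cases "j = 1")
      case True then show ?thesis using uC bad1 col1 by (auto simp: C_def bad_def)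
    next
      case False
      have "j - 1 \<in> {1..<Suc n}" using j False by auto
      then have "u \<noteq> xs (j-1)" using Qun[OF uQ] by auto
      then have "u \<in> Q xs j" using uC False by (auto simp: C_def)
      then show ?thesis using Q_props[of j u] j False by auto
    qed
    then have cj: "col j = col (Suc n)" using Qun[OF uQ] by simp
    then have jn: "j < n" using j col_ne_Suc[of n] by (cases "j = n") auto
    have sub: "Q xs (Suc n) \<subseteq> C xs j - {xs j}"
    proof
      fix w assume wQ: "w \<in> Q xs (Suc n)"
      note wu = Qun[OF wQ]
      have "w \<in> C xs j"
      proof (cases "w = u")
        case True then show ?thesis using uC by simp
      next
        case False
        have "0 < m {w, u}" using cliq wQ uQ False Cn1 by (auto simp: is_clique_def)
        moreover have "st xs j w = col j"
        proof -
          have "w \<notin> xs ` {1..<j}" using wu jn by auto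
          then show ?thesis using st_unmoved wu cj by simp
        qed
        ultimately have "w \<in> nbr m (st xs j) (col j) u" using False by (simp add: nbr_def)
        then show ?thesis using nbr_C[OF j uC] by auto
      qed
      moreover have "w \<noteq> xs j" using wu j jn by auto
      ultimately show "w \<in> C xs j - {xs j}" by simp
    qed
    have "card (C xs j - {xs j}) = \<alpha> (col j)" using W_bad[OF j] W_in[OF j] by (simp add: bad_def)
    then have Qeq: "Q xs (Suc n) = C xs j - {xs j}"
      using card_subset_eq[OF _ sub] cQ cj by simp
    show False
    proof (cases "j = 1")
      case False
      have "xs (j-1) \<in> C xs j" using False by (simp add: C_def)
      moreover have "xs (j-1) \<noteq> xs j"
      proof -
        have "Suc 0 \<le> j - Suc 0" using j False by auto
        then show ?thesis using xs_dist[of "j-1" j] j by auto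
      qed
      ultimately have x1Q: "xs (j-1) \<in> Q xs (Suc n)" using Qeq by simp
      moreover have "j - 1 \<in> {1..<n}" using j jn False by auto
      ultimately show False using M1[of "j-1"] by blast
    next
      case True
      have Qeq1: "Q xs (Suc n) = C1 - {x1}" using Qeq True W1 by (simp add: C_def)
      have cSa: "col (Suc n) = a" using cj True col1 by simp
      then have evn: "even n" using ab by (auto simp: col_def split: if_splits)
      show False
      proof (cases "n = 2")
        case True
        obtain z where z: "z \<in> C1 - {x1}" "\<not> 0 < m {z, x2}" using notc by auto
        have zQ: "z \<in> Q xs (Suc n)" using z Qeq1 by simp
        have "z \<noteq> xs n" using zQ Qdef by (auto simp: nbr_def)
        then have "0 < m {xs n, z}" using cliq zQ Cn1 by (auto simp: is_clique_def)
        then show False using z W2 True by (simp add: insert_commute)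
      next
        case False
        then have n4: "n \<ge> 4" using n2 evn by presburger
        have "Q xs (Suc n) \<noteq> {}"
        proof
          assume "Q xs (Suc n) = {}"
          then show False using cQ alpha_pos[OF col_range[of "Suc n"]] by simp
        qed
        then obtain y where yQ: "y \<in> Q xs (Suc n)" by auto
        have yC1: "y \<in> C1" "y \<noteq> x1" using yQ Qeq1 by auto
        have yCn: "y \<in> C xs (Suc n)" using yQ Cn1 by simp
        let ?s' = "st xs (Suc n)"
        have bn': "bad ?s' (C xs (Suc n)) a" using bn cSa by simp
        have H1: "bad (?s'(y := b)) (insert y (nbr m ?s' b y)) b"
          using hard(3)[OF MMn bn' yCn brange ab[symmetric]] .
        have H2: "bad (psi1(y := b)) (insert y (nbr m psi1 b y)) b" "card (nbr m psi1 b y) = \<alpha> b"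
          using hard(3,4)[OF MM1 bad1 yC1(1) brange ab[symmetric]] by auto
        have py: "psi1 y = a" using bad1 yC1 by (simp add: bad_def)
        have my: "0 < m {y, xs n}" "y \<noteq> xs n" using yQ Qdef by (auto simp: nbr_def)
        have xnN: "xs n \<in> nbr m psi1 b y"
          using my psi1_xs[OF nn] evn by (auto simp: nbr_def col_def insert_commute)
        have "card (nbr m psi1 b y - {xs n}) \<noteq> 0"
          using H2(2) xnN alpha_pos[OF brange] by simp
        then have "nbr m psi1 b y - {xs n} \<noteq> {}" by (metis card.empty)
        then obtain w where wN: "w \<in> nbr m psi1 b y" and wxn: "w \<noteq> xs n" by blast
        have pw: "psi1 w = b" "0 < m {w, y}" "w \<noteq> y" using wN by (auto simp: nbr_def)
        have wmv: "w \<notin> xs ` {1..<Suc n}"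
        proof
          assume "w \<in> xs ` {1..<Suc n}"
          then obtain i where i: "i \<in> {1..<Suc n}" "w = xs i" by auto
          have "i \<noteq> n" using i wxn by auto
          then have ir: "i \<in> {1..n}" "i < n" using i by auto
          have "col i = b" using psi1_xs[OF ir(1)] i pw by simp
          then have cSi: "col (Suc i) = a" using col_Suc[of i] ab by simp
          have "y \<notin> xs ` {1..<i}" using Qun[OF yQ] ir by auto
          then have "st xs i y = a" using st_unmoved py by simp
          moreover have "y \<noteq> xs i" using py pw i ab by auto
          moreover have "0 < m {y, xs i}" using pw i by (simp add: insert_commute)
          ultimately have "y \<in> Q xs (Suc i)" using cSi by (simp add: Q_def nbr_def)
          moreover have "y \<in> V xs i" using C_sub_V[of 1 i xs] ir yC1 by (auto simp: C_def)
          ultimately show False using W_fresh[of "Suc i"] ir by auto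
        qed
        have s'w: "?s' w = b" using st_unmoved[OF wmv] pw by simp
        have wN': "w \<in> nbr m ?s' b y" using pw s'w by (simp add: nbr_def)
        have x1N': "x1 \<in> nbr m ?s' b y"
        proof -
          have "?s' x1 = b" using st_moved[of 1 "Suc n"] n2 W1 by (simp add: col_def)
          moreover have "0 < m {x1, y}" using bad1 x1C yC1 by (auto simp: bad_def is_clique_def)
          ultimately show ?thesis using yC1 by (auto simp: nbr_def)
        qed
        have "w \<noteq> x1" using pw bad1 x1C ab by (auto simp: bad_def)
        then have mwx1: "0 < m {w, x1}"
          using H1 wN' x1N' by (auto simp: bad_def is_clique_def)
        have "w \<in> Q xs 2" using mwx1 pw \<open>w \<noteq> x1\<close> W1 col2 st1
          by (simp add: Q_def nbr_def)
        then have wC2: "w \<in> C xs 2" by (simp add: C_def)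
        have "0 < m {xs n, w}" using H2(1) wN xnN wxn by (auto simp: bad_def is_clique_def)
        moreover have "st xs 2 (xs n) = col 2"
        proof -
          have "xs n \<notin> xs ` {1..<2}" using xs_notin_prev[of n] n2 by auto
          then show ?thesis using st_unmoved psi1_xs[OF nn] evn col2 by (simp add: col_def)
        qed
        ultimately have "xs n \<in> nbr m (st xs 2) (col 2) w" using wxn by (simp add: nbr_def)
        then have "xs n \<in> C xs 2" using nbr_C[of 2 w] n2 wC2 by auto
        moreover have "C xs 2 \<subseteq> V xs (n-1)" using n4 by (intro C_sub_V) auto
        ultimately show False using xsn_notV by auto
      qed
    qed
  qed
qed

end


lemma cong_st: "\<forall>i\<le>n. ys i = xs i \<Longrightarrow> j \<le> Suc n \<Longrightarrow> st ys j = st xs j"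
proof -
  assume h: "\<forall>i\<le>n. ys i = xs i" and j: "j \<le> Suc n"
  have "ys ` {1..<j} = xs ` {1..<j}" using h j by (intro image_cong) auto
  then show ?thesis by (simp add: st_def)
qed

lemma cong_Q: "\<forall>i\<le>n. ys i = xs i \<Longrightarrow> j \<le> Suc n \<Longrightarrow> Q ys j = Q xs j"
  using cong_st[of n ys xs "j-1"] by (simp add: Q_def)

lemma cong_C: "\<forall>i\<le>n. ys i = xs i \<Longrightarrow> j \<le> Suc n \<Longrightarrow> C ys j = C xs j"
  using cong_Q[of n ys xs j] by (simp add: C_def)

lemma cong_V: "\<forall>i\<le>n. ys i = xs i \<Longrightarrow> k \<le> Suc n \<Longrightarrow> V ys k = V xs k"
  using cong_C[of n ys xs] unfolding V_def by (intro SUP_cong) auto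

lemma extend:
  assumes Wn: "W xs n" and n2: "n \<ge> 2"
  shows "\<exists>w. W (xs(Suc n := w)) (Suc n)"
proof -
  note S = step[OF Wn n2]
  have "Q xs (Suc n) \<noteq> {}"
  proof
    assume "Q xs (Suc n) = {}"
    then show False using S(3) alpha_pos[OF col_range[of "Suc n"]] by simp
  qed
  then obtain w where wQ: "w \<in> Q xs (Suc n)" by auto
  define ys where "ys = xs(Suc n := w)"
  have h: "\<forall>i\<le>n. ys i = xs i" by (simp add: ys_def)
  have ysn: "ys (Suc n) = w" by (simp add: ys_def)
  have Cn1: "C xs (Suc n) = insert (xs n) (Q xs (Suc n))" using n2 by (simp add: C_def)
  have "W ys (Suc n)"
    unfolding W_def
  proof (intro conjI; (rule ballI)?)
    show "ys 1 = x1" "ys 2 = x2" using W1[OF Wn] W2[OF Wn] n2 by (auto simp: ys_def)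
  next
    fix j assume j: "j \<in> {1..Suc n}"
    show "st ys j \<in> MM \<and> bad (st ys j) (C ys j) (col j) \<and> ys j \<in> C ys j"
    proof (cases "j = Suc n")
      case True
      have e1: "st ys j = st xs j" "C ys j = C xs j" using cong_st[OF h, of j] cong_C[OF h, of j] True by auto
      show ?thesis unfolding e1 using S(1,2) wQ Cn1 True ysn by auto
    next
      case False
      then have jn: "j \<in> {1..n}" using j by auto
      have e1: "st ys j = st xs j" "C ys j = C xs j" "ys j = xs j"
        using cong_st[OF h, of j] cong_C[OF h, of j] h jn by auto
      show ?thesis unfolding e1 using W_st[OF Wn jn] W_bad[OF Wn jn] W_in[OF Wn jn] by auto
    qed
  next
    fix j assume j: "j \<in> {2..Suc n}"
    show "ys j \<in> Q ys j \<and> Q ys j \<inter> V ys (j-1) = {}"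
    proof (cases "j = Suc n")
      case True
      have e1: "Q ys j = Q xs j" "V ys (j-1) = V xs n" using cong_Q[OF h, of j] cong_V[OF h, of n] True by auto
      show ?thesis unfolding e1 using S(4) wQ True ysn by auto
    next
      case False
      then have jn: "j \<in> {2..n}" using j by auto
      have e1: "Q ys j = Q xs j" "V ys (j-1) = V xs (j-1)" "ys j = xs j"
        using cong_Q[OF h, of j] cong_V[OF h, of "j-1"] h jn by auto
      show ?thesis unfolding e1 using W_Q[OF Wn jn] W_fresh[OF Wn jn] by auto
    qed
  qed
  then show ?thesis unfolding ys_def by blast
qed

lemma W_base: "W (\<lambda>j. if j = 1 then x1 else x2) 2"
proof -
  let ?xs = "\<lambda>j::nat. if j = 1 then x1 else x2"
  have px1: "psi1 x1 = a" using bad1 x1C by (simp add: bad_def)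
  have st2: "st ?xs 2 = psi1(x1 := b)"
  proof
    fix v
    have "{1..<2::nat} = {1}" by auto
    then have "?xs ` {1..<2} = {x1}" by simp
    then show "st ?xs 2 v = (psi1(x1 := b)) v" using px1 by (simp add: st_def)
  qed
  have Q2: "Q ?xs 2 = nbr m psi1 b x1" using st1[of ?xs] by (simp add: Q_def col_def)
  note H = hard[OF MM1 bad1 x1C brange ab[symmetric]]
  show ?thesis unfolding W_def
  proof (intro conjI; (rule ballI)?)
    fix j :: nat assume j: "j \<in> {1..2}"
    then consider "j = 1" | "j = 2" by force
    then show "st ?xs j \<in> MM \<and> bad (st ?xs j) (C ?xs j) (col j) \<and> ?xs j \<in> C ?xs j"
    proof cases
      case 1 then show ?thesis using MM1 bad1 x1C st1[of ?xs] by (simp add: C_def col_def)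
    next
      case 2 then show ?thesis using H(2,3) st2 Q2 x2N by (simp add: C_def col_def)
    qed
  next
    fix j :: nat assume j: "j \<in> {2..2}"
    then have j2: "j = 2" by simp
    have "nbr m psi1 b x1 \<inter> C1 = {}"
      using bad1 ab by (auto simp: nbr_def bad_def)
    then show "?xs j \<in> Q ?xs j \<and> Q ?xs j \<inter> V ?xs (j-1) = {}"
      using j2 Q2 x2N by (simp add: V_def C_def)
  qed auto
qed

lemma walk_False: False
proof -
  have ex: "\<exists>xs. W xs n" if "n \<ge> 2" for n
    using that
  proof (induction n rule: nat_induct_at_least)
    case base then show ?case using W_base by blast
  next
    case (Suc n) then show ?case using extend by blast
  qed
  let ?n = "card (UNIV :: 'a set) + 2"
  obtain xs where Wx: "W xs ?n" using ex[of ?n] by auto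
  have "inj_on xs {1..?n}"
  proof (rule inj_onI)
    fix i j assume i: "i \<in> {1..?n}" and j: "j \<in> {1..?n}" and eq: "xs i = xs j"
    show "i = j"
    proof (rule ccontr)
      assume "i \<noteq> j"
      then have "i < j \<or> j < i" by auto
      then show False using xs_dist[OF Wx, of i j] xs_dist[OF Wx, of j i] i j eq by auto
    qed
  qed
  then have "card (xs ` {1..?n}) = ?n" by (simp add: card_image)
  moreover have "card (xs ` {1..?n}) \<le> card (UNIV :: 'a set)" by (rule card_mono) auto
  ultimately show False by simp
qed

end

context setting
begin

lemma complete:
  assumes "psi \<in> MM" "bad psi K a" "x \<in> K" "b \<in> {1..c+1}" "a \<noteq> b"
    "y \<in> nbr m psi b x" "z \<in> K - {x}"
  shows "0 < m {z, y}"
proof (rule ccontr)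
  assume "\<not> 0 < m {z, y}"
  then interpret walk m D c \<alpha> psi K a b x y
    using assms by unfold_locales auto
  show False by (rule walk_False)
qed

end

context setting
begin

lemma no_bad: "\<exists>psi\<in>MM. badset psi = {}"
proof -
  obtain psi where MMp: "psi \<in> MM" using MM_ne by auto
  show ?thesis
  proof (cases "badset psi = {}")
    case True then show ?thesis using MMp by blast
  next
    case False
    then obtain K a where bK: "bad psi K a" by (auto simp: badset_def)
    have arng: "a \<in> {1..c+1}" and cK: "card K = \<alpha> a + 1" using bK by (auto simp: bad_def)
    have "K \<noteq> {}" using cK by auto
    then obtain x where xK: "x \<in> K" by auto
    have Na: "nbr m psi a x = K - {x}"
    proof -
      obtain l where "l \<in> {1..c+1}" "l \<noteq> a"
      proof (cases "a = 1")
        case True then show ?thesis using that[of 2] c1 by auto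
      next
        case False then show ?thesis using that[of 1] c1 by auto
      qed
      then show ?thesis using hard(1)[OF MMp bK xK] by blast
    qed
    have cN: "card (nbr m psi l x) = \<alpha> l" if l: "l \<in> {1..c+1}" for l
    proof (cases "l = a")
      case True then show ?thesis using Na cK xK by simp
    next
      case False then show ?thesis using hard(4)[OF MMp bK xK l] by simp
    qed
    let ?B = "insert x (\<Union>l\<in>{1..c+1}. nbr m psi l x)"
    have xnot: "x \<notin> (\<Union>l\<in>{1..c+1}. nbr m psi l x)" by (auto simp: nbr_def)
    have "card (\<Union>l\<in>{1..c+1}. nbr m psi l x) = (\<Sum>l=1..c+1. card (nbr m psi l x))"
      by (rule card_UN_disjoint) (auto simp: nbr_def)
    also have "\<dots> = (\<Sum>l=1..c+1. \<alpha> l)" using cN by simp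
    finally have cardB: "card ?B = D + 1" using xnot Ds by simp
    have cl: "is_clique m ?B"
      unfolding is_clique_def
    proof (intro ballI impI)
      fix u v assume uB: "u \<in> ?B" and vB: "v \<in> ?B" and uv: "u \<noteq> v"
      have adjx: "0 < m {w, x}" if "w \<in> (\<Union>l\<in>{1..c+1}. nbr m psi l x)" for w
        using that by (auto simp: nbr_def)
      show "0 < m {u, v}"
      proof (cases "u = x")
        case True then show ?thesis using vB uv adjx by (auto simp: insert_commute)
      next
        case ux: False
        show ?thesis
        proof (cases "v = x")
          case True then show ?thesis using uB ux adjx by auto
        next
          case vx: False
          obtain l1 where l1: "l1 \<in> {1..c+1}" "u \<in> nbr m psi l1 x" using uB ux by auto
          obtain l2 where l2: "l2 \<in> {1..c+1}" "v \<in> nbr m psi l2 x" using vB vx by auto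
          show ?thesis
          proof (cases "l1 = l2")
            case True
            show ?thesis
            proof (cases "l1 = a")
              case True
              then have "u \<in> K" "v \<in> K" using l1 l2 Na \<open>l1 = l2\<close> by auto
              then show ?thesis using bK uv by (auto simp: bad_def is_clique_def)
            next
              case False
              have "bad (psi(x := l1)) (insert x (nbr m psi l1 x)) l1"
                using hard(3)[OF MMp bK xK l1(1) False] .
              then show ?thesis using l1 l2 \<open>l1 = l2\<close> uv by (auto simp: bad_def is_clique_def)
            qed
          next
            case False
            show ?thesis
            proof (cases "l1 = a")
              case True
              have "u \<in> K - {x}" using l1 Na True by simp
              then show ?thesis using complete[OF MMp bK xK l2(1) _ l2(2)] False True by simp
            next
              case l1a: False
              show ?thesis
              proof (cases "l2 = a")
                case True
                have "v \<in> K - {x}" using l2 Na True by simp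
                then have "0 < m {v, u}" using complete[OF MMp bK xK l1(1) _ l1(2)] False True by simp
                then show ?thesis by (simp add: insert_commute)
              next
                case l2a: False
                have M': "psi(x := l1) \<in> MM" using hard(2)[OF MMp bK xK l1(1) l1a] .
                have b': "bad (psi(x := l1)) (insert x (nbr m psi l1 x)) l1"
                  using hard(3)[OF MMp bK xK l1(1) l1a] .
                have "v \<in> nbr m (psi(x := l1)) l2 x" using l2 nbr_upd by metis
                moreover have "u \<in> insert x (nbr m psi l1 x) - {x}" using l1 ux by simp
                ultimately show ?thesis
                  using complete[OF M' b' insertI1 l2(1) False] by simp
              qed
            qed
          qed
        qed
      qed
    qed
    then show ?thesis using cardB nocl by blast
  qed
qed

end

theorem theorem2:
  fixes m :: "'a::finite set \<Rightarrow> nat" and D c :: nat and \<alpha> :: "nat \<Rightarrow> nat"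
  assumes "loopless_multigraph m"
    and "\<not> (\<exists>K. is_clique m K \<and> card K = D + 1)"
    and "max_degree m \<le> D"
    and "c \<ge> 1"
    and "D = (\<Sum>i=1..c+1. \<alpha> i)"
    and "\<forall>i\<in>{1..c+1}. \<alpha> i \<ge> 2"
  shows "\<exists>\<xi>\<in>colorings c.
           Phi m c \<alpha> \<xi> = Min (Phi m c \<alpha> ` colorings c) \<and>
           (\<forall>i\<in>{1..c+1}. \<not> (\<exists>K. is_clique m K \<and> card K = \<alpha> i + 1 \<and> (\<forall>v\<in>K. \<xi> v = i)))"
proof -
  interpret setting m D c \<alpha> using assms by unfold_locales
  obtain psi where p: "psi \<in> MM" "badset psi = {}" using no_bad by auto
  have "psi \<in> colorings c" "Phi m c \<alpha> psi = Min (Phi m c \<alpha> ` colorings c)"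
    using p(1) by (auto simp: MM_def Mn_def Phimin_def)
  moreover have "\<forall>i\<in>{1..c+1}. \<not> (\<exists>K. is_clique m K \<and> card K = \<alpha> i + 1 \<and> (\<forall>v\<in>K. psi v = i))"
    using p(2) by (auto simp: badset_def bad_def)
  ultimately show ?thesis by blast
qed

end
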